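(* Let $0<\epsilon\le0.01$, $\Delta\ge0$, and let $\mathbb{D}_1,\mathbb{D}_2$ be distributions on $(0,\infty)$ with $\mathrm{EMD}(\mathbb{D}_1,\mathbb{D}_2)\le\Delta$. Then for every $\theta\in\mathbb{R}^+$, $$\mathbb{E}_{y\sim\mathbb{D}_1}[g(\theta+\epsilon,y)]\le(1+\epsilon)\left(1+\frac{\Delta}{\epsilon^2}\right)\mathbb{E}_{y\sim\mathbb{D}_2}[g(\theta,y)].$$
   Context: For threshold $\theta\ge0$ and season length $y>0$: $g(\theta,y)=\frac{1+\theta}{\min\{1,y\}}$ if $y\ge\theta$ and $g(\theta,y)=\frac{y}{\min\{1,y\}}$ otherwise (the competitive ratio of the ski-rental strategy that rents, at cost $1$ per unit time, until time $\theta$ and then buys at cost $1$). Earth mover distance: for distributions $\mathbb{X},\mathbb{Y}$ on $\mathbb{R}$, $\mathrm{EMD}(\mathbb{X},\mathbb{Y})=\min\mathbb{E}_{(u,v)\sim\mathbb{J}}|u-v|$ over all couplings $\mathbb{J}$ with marginals $\mathbb{X},\mathbb{Y}$. *)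

theory Defs
  imports "HOL-Probability.Probability"
begin

text \<open>Competitive ratio of the ski-rental strategy with threshold theta on season length y.\<close>
definition g :: "real \<Rightarrow> real \<Rightarrow> real" where
  "g \<theta> y = (if y \<ge> \<theta> then (1 + \<theta>) / min 1 y else y / min 1 y)"

definition real_distr :: "real measure \<Rightarrow> bool" where
  "real_distr D \<longleftrightarrow> prob_space D \<and> sets D = sets borel"

definition coupling :: "(real \<times> real) measure \<Rightarrow> real measure \<Rightarrow> real measure \<Rightarrow> bool" where
  "coupling J X Y \<longleftrightarrow> prob_space J \<and> sets J = sets borel \<and>
     distr J borel fst = X \<and> distr J borel snd = Y"

definition EMD :: "real measure \<Rightarrow> real measure \<Rightarrow> ennreal" where
  "EMD X Y = (INF J \<in> {J. coupling J X Y}. \<integral>\<^sup>+ p. ennreal \<bar>fst p - snd p\<bar> \<partial>J)"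

end

theory Submission
  imports Defs
begin

lemma g_ge1: assumes "0 < v" "0 \<le> t" shows "1 \<le> g t v"
proof (cases "t \<le> v")
  case True
  have "min 1 v \<le> 1" "0 < min 1 v" using assms by auto
  moreover have "1 \<le> 1 + t \<or> True" by simp
  ultimately show ?thesis using True assms
    by (auto simp: g_def min_def field_simps)
next
  case False then show ?thesis using assms by (auto simp: g_def min_def)
qed

lemma pw:
  fixes e t u v :: real
  assumes e: "0<e" "e\<le>1" and t: "0\<le>t" and u: "0<u" and v: "0<v"
  shows "g (t+e) u \<le> (1+e)*g t v + (1+e)/e^2 * \<bar>u-v\<bar>"
proof -
  define c where "c = (1+e)/e^2"
  define d where "d = \<bar>u-v\<bar>"
  have d0: "0 \<le> d" by (simp add: d_def)
  have ge1: "1 \<le> g t v" using g_ge1 v t by blast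
  have c1: "1 \<le> c" proof -
    have "e^2 \<le> 1" using e by (simp add: power_le_one)
    also have "1 \<le> 1 + e" using e by simp
    finally show ?thesis using e unfolding c_def by (simp add: field_simps)
  qed
  have base: "g t v \<le> (1+e)*g t v + c*d"
  proof -
    have "0 \<le> c*d" using c1 d0 by simp
    moreover have "0 \<le> e*g t v" using ge1 e by simp
    ultimately show ?thesis by (simp add: algebra_simps)
  qed
  have main: "g (t+e) u \<le> (1+e)*g t v + c*d"
  proof (cases "u < t+e")
    case A: True
    have lhs: "g (t+e) u = max 1 u" using A u by (auto simp: g_def min_def max_def)
    show ?thesis
    proof (cases "t \<le> v")
      case True
      have "1 + t \<le> g t v"
      proof -
        have "g t v = (1+t)/min 1 v" using True by (simp add: g_def)
        moreover have "(1+t)/1 \<le> (1+t)/min 1 v"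
          by (rule divide_left_mono) (use t v in auto)
        ultimately show ?thesis by simp
      qed
      moreover have "max 1 u \<le> 1 + t" using A e t by auto
      ultimately show ?thesis using lhs base by linarith
    next
      case False
      have "g t v = max 1 v" using False v by (auto simp: g_def min_def max_def)
      moreover have "max 1 u \<le> max 1 v + d" unfolding d_def by auto
      moreover have "d \<le> c*d" using c1 d0 by (simp add: mult_right_mono[of 1 c d, simplified])
      moreover have "g t v \<le> (1+e)*g t v" using ge1 e by simp
      ultimately show ?thesis using lhs by linarith
    qed
  next
    case B: False
    define L where "L = 1+t+e"
    have lhs: "g (t+e) u = L / min 1 u" using B by (simp add: g_def L_def add.assoc)
    show ?thesis
    proof (cases "t \<le> v")
      case True
      define a where "a = min 1 u"
      define b where "b = min 1 v"
      have a0: "0 < a" "a \<le> 1" using u by (auto simp: a_def)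
      have b0: "0 < b" "b \<le> 1" using v by (auto simp: b_def)
      have gv: "g t v = (1+t)/b" using True by (simp add: g_def b_def)
      have Lle: "L/b \<le> (1+e)*((1+t)/b)"
        using b0 e t by (simp add: L_def field_simps)
      have "L/a \<le> L/b + c*d"
      proof (cases "b \<le> a")
        case True
        have "L/a \<le> L/b" by (rule divide_left_mono) (use True a0 b0 e t in \<open>auto simp: L_def\<close>)
        then show ?thesis using c1 d0 by (smt (verit) mult_nonneg_nonneg)
      next
        case False
        then have au: "a = u" "u < 1" "u < v" unfolding a_def b_def by (auto simp: min_def split: if_splits)
        have ba: "b - a \<le> d" using au unfolding b_def d_def by auto
        have ate: "t + e \<le> a" using au B by simp
        have "L/a = L/b + L*(b-a)/(a*b)" using a0 b0 by (simp add: field_simps)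
        also have "L*(b-a)/(a*b) \<le> L*(b-a)/(a*a)"
          using False a0 b0 e t by (intro divide_left_mono) (auto simp: L_def intro!: mult_nonneg_nonneg mult_left_mono mult_pos_pos)
        also have "L*(b-a)/(a*a) \<le> L*d/(a*a)"
          using ba a0 e t by (intro divide_right_mono mult_left_mono) (auto simp: L_def)
        also have "L*d/(a*a) = d * (L/(a*a))" by simp
        also have "L/(a*a) \<le> c"
        proof -
          have "L/(a*a) \<le> L/((t+e)*(t+e))"
            using ate e t by (intro divide_left_mono mult_mono) (auto simp: L_def)
          also have "L/((t+e)*(t+e)) \<le> (1+e)/e^2"
          proof -
            have "(1+(t+e))*e^2 \<le> (1+e)*((t+e)*(t+e))"
            proof -
              have "(1+e)*((t+e)*(t+e)) - (1+(t+e))*e^2 = t*(t+2*e) + e*(t+e)*t"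
                by (simp add: algebra_simps power2_eq_square)
              moreover have "0 \<le> t*(t+2*e) + e*(t+e)*t" using t e by simp
              ultimately show ?thesis by linarith
            qed
            then show ?thesis using e t
              by (simp add: L_def divide_simps) (simp add: add.assoc mult.commute)
          qed
          finally show ?thesis by (simp add: c_def)
        qed
        then have "d * (L/(a*a)) \<le> d*c" using d0 by (rule mult_left_mono)
        finally show ?thesis by (simp add: mult.commute)
      qed
      moreover have "g (t+e) u = L/a" using lhs by (simp add: a_def)
      moreover have "(1+e)*g t v = (1+e)*((1+t)/b)" using gv by simp
      ultimately show ?thesis using Lle by linarith
    next
      case False
      have gv: "g t v = max 1 v" using False v by (auto simp: g_def min_def max_def)
      have dd: "d = u - v" "e < d" using B False e by (auto simp: d_def)
      show ?thesis
      proof (cases "1 \<le> u")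
        case True
        have lhs': "g (t+e) u = L" using lhs True by simp
        have "d + 1 \<le> c*d"
        proof -
          have "1/e \<le> d/e^2"
          proof -
            have "1/e = e/e^2" using e by (simp add: power2_eq_square)
            also have "\<dots> \<le> d/e^2" using dd e by (intro divide_right_mono) auto
            finally show ?thesis .
          qed
          moreover have "1 \<le> 1/e" using e by simp
          moreover have "c*d = d/e^2 + e*(d/e^2)" unfolding c_def by (simp add: add_divide_distrib algebra_simps)
          moreover have "d \<le> e*(d/e^2)" using e dd by (simp add: field_simps power2_eq_square)
          ultimately show ?thesis by linarith
        qed
        moreover have "v \<le> g t v" using gv by simp
        moreover have "g t v \<le> (1+e)*g t v" using ge1 e by simp
        ultimately show ?thesis using lhs' dd B unfolding L_def by linarith
      next
        case False
        have lhs': "g (t+e) u = L/u" using lhs False by simp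
        have "L/u \<le> L/(t+e)" using B e t by (intro divide_left_mono) (auto simp: L_def)
        also have "L/(t+e) = 1 + 1/(t+e)" using e t by (simp add: L_def field_simps)
        also have "1/(t+e) \<le> 1/e" using e t by (intro divide_left_mono) auto
        finally have l1: "L/u \<le> 1 + 1/e" by simp
        have "c*e = (1+e)/e" unfolding c_def using e by (simp add: power2_eq_square)
        moreover have "c*e \<le> c*d" using dd c1 by (intro mult_left_mono) auto
        moreover have "(1+e)/e = 1/e + 1" using e by (simp add: field_simps)
        moreover have "g t v \<le> (1+e)*g t v" using ge1 e by simp
        ultimately show ?thesis using lhs' l1 ge1 by linarith
      qed
    qed
  qed
  then show ?thesis by (simp add: c_def d_def)
qed

lemma g_meas[measurable]: "g t \<in> borel_measurable borel"
  unfolding g_def by measurable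

lemma key:
  fixes e t :: real and D1 D2 :: "real measure" and J :: "(real\<times>real) measure"
  assumes e: "0<e" "e\<le>1" and t: "0\<le>t"
    and P1: "AE y in D1. 0 < y" and P2: "AE y in D2. 0 < y"
    and cp: "coupling J D1 D2"
  shows "(\<integral>\<^sup>+ y. ennreal (g (t + e) y) \<partial>D1)
     \<le> ennreal (1+e) * (\<integral>\<^sup>+ y. ennreal (g t y) \<partial>D2) + ennreal ((1+e)/e^2) * (\<integral>\<^sup>+ p. ennreal \<bar>fst p - snd p\<bar> \<partial>J)"
proof -
  have sJ: "sets J = sets borel" and D1: "distr J borel fst = D1" and D2: "distr J borel snd = D2"
    using cp by (auto simp: coupling_def)
  have mJ: "\<And>N. measurable J N = measurable (borel \<Otimes>\<^sub>M borel) N"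
    by (intro measurable_cong_sets) (simp_all add: sJ borel_prod[symmetric])
  have mf: "fst \<in> J \<rightarrow>\<^sub>M borel" and ms: "snd \<in> J \<rightarrow>\<^sub>M borel" by (simp_all add: mJ)
  have A1: "AE p in J. 0 < fst p"
    using P1 unfolding D1[symmetric] by (subst (asm) AE_distr_iff) (use mf in auto)
  have A2: "AE p in J. 0 < snd p"
    using P2 unfolding D2[symmetric] by (subst (asm) AE_distr_iff) (use ms in auto)
  have I1: "(\<integral>\<^sup>+ y. ennreal (g (t + e) y) \<partial>D1) = (\<integral>\<^sup>+ p. ennreal (g (t + e) (fst p)) \<partial>J)"
    unfolding D1[symmetric] by (rule nn_integral_distr[OF mf]) measurable
  have I2: "(\<integral>\<^sup>+ y. ennreal (g t y) \<partial>D2) = (\<integral>\<^sup>+ p. ennreal (g t (snd p)) \<partial>J)"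
    unfolding D2[symmetric] by (rule nn_integral_distr[OF ms]) measurable
  have "(\<integral>\<^sup>+ p. ennreal (g (t + e) (fst p)) \<partial>J)
      \<le> (\<integral>\<^sup>+ p. ennreal (1+e) * ennreal (g t (snd p)) + ennreal ((1+e)/e^2) * ennreal \<bar>fst p - snd p\<bar> \<partial>J)"
  proof (rule nn_integral_mono_AE)
    show "AE p in J. ennreal (g (t + e) (fst p)) \<le> ennreal (1+e) * ennreal (g t (snd p)) + ennreal ((1+e)/e^2) * ennreal \<bar>fst p - snd p\<bar>"
      using A1 A2
    proof eventually_elim
      case (elim p)
      define G where "G = g t (snd p)"
      define D where "D = \<bar>fst p - snd p\<bar>"
      define c where "c = (1+e)/e^2"
      have h1: "0 \<le> G" using g_ge1[of "snd p" t] elim t by (simp add: G_def)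
      have h2: "0 \<le> c" using e by (simp add: c_def)
      have h3: "0 \<le> D" by (simp add: D_def)
      have h4: "0 \<le> 1+e" using e by simp
      have eq: "ennreal ((1+e)*G + c*D) = ennreal (1+e) * ennreal G + ennreal c * ennreal D"
        by (simp only: ennreal_plus[OF mult_nonneg_nonneg[OF h4 h1] mult_nonneg_nonneg[OF h2 h3]]
             ennreal_mult[OF h4 h1] ennreal_mult[OF h2 h3])
      have "ennreal (g (t + e) (fst p)) \<le> ennreal ((1+e)*G + c*D)"
        using pw[OF e t elim] by (intro ennreal_leI) (simp add: G_def D_def c_def)
      then show ?case unfolding eq by (simp add: G_def D_def c_def)
    qed
  qed
  also have "\<dots> = ennreal (1+e) * (\<integral>\<^sup>+ p. ennreal (g t (snd p)) \<partial>J) + ennreal ((1+e)/e^2) * (\<integral>\<^sup>+ p. ennreal \<bar>fst p - snd p\<bar> \<partial>J)"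
    by (subst nn_integral_add) (simp_all add: mJ nn_integral_cmult)
  finally show ?thesis using I1 I2 by simp
qed

theorem mainTheorem6:
  fixes \<epsilon> \<Delta> \<theta> :: real and D1 D2 :: "real measure"
  assumes "0 < \<epsilon>" and "\<epsilon> \<le> 0.01" and "0 \<le> \<Delta>"
    and "real_distr D1" and "AE y in D1. 0 < y"
    and "real_distr D2" and "AE y in D2. 0 < y"
    and "EMD D1 D2 \<le> ennreal \<Delta>"
    and "0 < \<theta>"
  shows "(\<integral>\<^sup>+ y. ennreal (g (\<theta> + \<epsilon>) y) \<partial>D1)
           \<le> ennreal ((1 + \<epsilon>) * (1 + \<Delta> / \<epsilon>\<^sup>2)) * (\<integral>\<^sup>+ y. ennreal (g \<theta> y) \<partial>D2)"
proof -
  define c where "c = (1+\<epsilon>)/\<epsilon>^2"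
  define I1 where "I1 = (\<integral>\<^sup>+ y. ennreal (g (\<theta> + \<epsilon>) y) \<partial>D1)"
  define I2 where "I2 = (\<integral>\<^sup>+ y. ennreal (g \<theta> y) \<partial>D2)"
  have e: "0 < \<epsilon>" "\<epsilon> \<le> 1" using assms(1,2) by auto
  have t: "0 \<le> \<theta>" using assms(9) by simp
  have c0: "0 < c" using e by (simp add: c_def)
  have bound: "I1 \<le> (ennreal (1+\<epsilon>) * I2 + ennreal (c*\<Delta>)) + ennreal x" if x: "0 < x" for x
  proof -
    have "ennreal \<Delta> < ennreal (\<Delta> + x/c)"
      using x c0 assms(3) by (intro ennreal_lessI) (auto simp: add_nonneg_pos)
    then have "EMD D1 D2 < ennreal (\<Delta> + x/c)" using assms(8) by (rule order.strict_trans1[rotated])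
    then obtain J where cp: "coupling J D1 D2"
      and EJ: "(\<integral>\<^sup>+ p. ennreal \<bar>fst p - snd p\<bar> \<partial>J) < ennreal (\<Delta> + x/c)"
      unfolding EMD_def INF_less_iff by auto
    have "I1 \<le> ennreal (1+\<epsilon>) * I2 + ennreal c * (\<integral>\<^sup>+ p. ennreal \<bar>fst p - snd p\<bar> \<partial>J)"
      unfolding I1_def I2_def c_def by (rule key[OF e t assms(5) assms(7) cp])
    also have "\<dots> \<le> ennreal (1+\<epsilon>) * I2 + ennreal c * ennreal (\<Delta> + x/c)"
      using EJ by (intro add_left_mono mult_left_mono) auto
    also have "ennreal c * ennreal (\<Delta> + x/c) = ennreal (c*\<Delta>) + ennreal x"
    proof -
      have "c * (\<Delta> + x/c) = c*\<Delta> + x" using c0 by (simp add: field_simps)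
      moreover have "0 \<le> \<Delta> + x/c" using c0 x assms(3) by simp
      moreover have "0 \<le> c" using c0 by simp
      ultimately have "ennreal c * ennreal (\<Delta> + x/c) = ennreal (c*\<Delta> + x)"
        by (metis ennreal_mult)
      also have "\<dots> = ennreal (c*\<Delta>) + ennreal x"
        using c0 x assms(3) by (intro ennreal_plus) auto
      finally show ?thesis .
    qed
    finally show ?thesis by (simp add: add.assoc)
  qed
  have step1: "I1 \<le> ennreal (1+\<epsilon>) * I2 + ennreal (c*\<Delta>)"
    by (rule ennreal_le_epsilon) (use bound in auto)
  have ps: "prob_space D2" using assms(6) by (simp add: real_distr_def)
  have I2ge: "1 \<le> I2"
  proof -
    have "(1::ennreal) = (\<integral>\<^sup>+ y. 1 \<partial>D2)"
      using ps by (simp add: prob_space.emeasure_space_1)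
    also have "\<dots> \<le> I2" unfolding I2_def
      using assms(7) by (intro nn_integral_mono_AE) (auto elim!: eventually_mono intro: g_ge1[OF _ t])
    finally show ?thesis .
  qed
  have "ennreal (c*\<Delta>) = ennreal (c*\<Delta>) * 1" by simp
  also have "\<dots> \<le> ennreal (c*\<Delta>) * I2" using I2ge by (intro mult_left_mono) auto
  finally have step2: "ennreal (c*\<Delta>) \<le> ennreal (c*\<Delta>) * I2" .
  have "I1 \<le> ennreal (1+\<epsilon>) * I2 + ennreal (c*\<Delta>) * I2"
    using step1 step2 by (meson add_left_mono order_trans)
  also have "\<dots> = ennreal ((1+\<epsilon>) + c*\<Delta>) * I2"
    using e c0 assms(3) by (simp add: ennreal_plus distrib_right)
  also have "(1+\<epsilon>) + c*\<Delta> = (1 + \<epsilon>) * (1 + \<Delta> / \<epsilon>\<^sup>2)"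
    using e by (simp add: c_def field_simps)
  finally show ?thesis by (simp add: I1_def I2_def)
qed

end
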